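(* Let $H:\mathbb{A}\to\mathbb{A}$ be a homeomorphism, $\Psi\subset\mathbb{A}$ a closed set with $H(\Psi)=\Psi$, $\tilde\Psi=q^{-1}(\Psi)$ and $\tilde H$ a lift of $H$ to $[0,1]\times\mathbb{R}$. If $H|_\Psi$ is uniformly rigid and $\tilde\Psi$ is connected, then there is a well defined rotation number $\alpha$ common to all points of $\Psi$: there is $\alpha\in\mathbb{R}$ with $\lim_{n\to\infty}\frac{\pi_2(\tilde H^n(y))-\pi_2(y)}{n}=\alpha$ for every $y\in\tilde\Psi$.
   Context: $\mathbb{A}=[0,1]\times\mathbb{R}/\mathbb{Z}$, $q:[0,1]\times\mathbb{R}\to\mathbb{A}$, $q(t,r)=(t,r+\mathbb{Z})$, is the universal covering, $\mathbb{A}$ carries the metric making $q$ a local isometry, a lift $\tilde H$ satisfies $q\circ\tilde H=H\circ q$, and $\pi_2(t,r)=r$. A homeomorphism $T:Y\to Y$ is uniformly rigid if $T^{n_i}\to\mathrm{id}_Y$ uniformly for some sequence $n_i\nearrow\infty$. *)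

theory Defs
  imports "HOL-Analysis.Analysis"
begin

text \<open>The closed annulus A = [0,1] x R/Z is represented by the set
  [0,1] x [0,1) of pairs (t, r), the second coordinate being the
  representative of r + Z in [0,1).  The covering map is q(t,r) = (t, frac r).\<close>

definition annulus :: "(real \<times> real) set" where
  "annulus = {0..1} \<times> {0..<1}"

definition ann_q :: "real \<times> real \<Rightarrow> real \<times> real" where
  "ann_q = (\<lambda>(t, r). (t, frac r))"

definition circ_dist :: "real \<Rightarrow> real \<Rightarrow> real" where
  "circ_dist x y = \<bar>(x - y) - of_int (round (x - y))\<bar>"

lemma circ_dist_commute: "circ_dist x y = circ_dist y x"
proof -
  have "circ_dist x y \<le> circ_dist y x"
    using round_diff_minimal[of "x - y" "- round (y - x)"]
    unfolding circ_dist_def by (simp add: abs_minus_commute)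
  moreover have "circ_dist y x \<le> circ_dist x y"
    using round_diff_minimal[of "y - x" "- round (x - y)"]
    unfolding circ_dist_def by (simp add: abs_minus_commute)
  ultimately show ?thesis by simp
qed

lemma circ_dist_triangle: "circ_dist x z \<le> circ_dist x y + circ_dist y z"
proof -
  have "circ_dist x z \<le> \<bar>(x - z) - of_int (round (x - y) + round (y - z))\<bar>"
    unfolding circ_dist_def by (rule round_diff_minimal)
  also have "\<dots> \<le> circ_dist x y + circ_dist y z"
    unfolding circ_dist_def by simp
  finally show ?thesis .
qed

lemma circ_dist_zero:
  assumes "x \<in> {0..<1}" "y \<in> {0..<1}" "circ_dist x y = 0"
  shows "x = y"
proof -
  have e: "x - y = of_int (round (x - y))" using assms(3) by (simp add: circ_dist_def)
  have "\<bar>x - y\<bar> < 1" using assms(1,2) by auto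
  then have "\<bar>of_int (round (x - y)) :: real\<bar> < 1" using e by simp
  then have "round (x - y) = 0" by linarith
  then show ?thesis using e by simp
qed

lemma Metric_space_circ: "Metric_space {0..<1} circ_dist"
  by unfold_locales
    (auto simp: circ_dist_commute circ_dist_triangle circ_dist_zero,
     auto simp: circ_dist_def)

text \<open>The flat metric on the annulus making q a local isometry.\<close>
definition ann_metric :: "(real \<times> real) metric" where
  "ann_metric = prod_metric (submetric euclidean_metric {0..1}) (metric ({0..<1}, circ_dist))"

lemma mspace_ann_metric: "mspace ann_metric = annulus"
  by (simp add: ann_metric_def annulus_def Metric_space.mspace_metric[OF Metric_space_circ])

definition ann_dist :: "real \<times> real \<Rightarrow> real \<times> real \<Rightarrow> real" where
  "ann_dist = mdist ann_metric"

definition ann_top :: "(real \<times> real) topology" where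
  "ann_top = mtopology_of ann_metric"

definition uniformly_rigid_on :: "(real \<times> real) set \<Rightarrow> (real \<times> real \<Rightarrow> real \<times> real) \<Rightarrow> bool" where
  "uniformly_rigid_on Y T \<longleftrightarrow>
     (\<exists>n :: nat \<Rightarrow> nat. strict_mono n \<and>
        (\<forall>\<epsilon>>0. \<forall>\<^sub>F i in sequentially. \<forall>y\<in>Y. ann_dist ((T ^^ n i) y) y < \<epsilon>))"

end

theory Submission
  imports Defs
begin

lemma dint_shift:
  fixes x :: real
  shows "\<bar>x + of_int k - of_int (round (x + of_int k))\<bar> = \<bar>x - of_int (round x)\<bar>"
proof -
  have 1: "\<bar>x + of_int k - of_int (round (x + of_int k))\<bar> \<le> \<bar>x + of_int k - of_int (round x + k)\<bar>"
    by (rule round_diff_minimal)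
  have 2: "\<bar>x - of_int (round x)\<bar> \<le> \<bar>x - of_int (round (x + of_int k) - k)\<bar>"
    by (rule round_diff_minimal)
  show ?thesis using 1 2 by simp
qed

lemma circ_frac: "circ_dist (frac a) (frac b) = \<bar>(a - b) - of_int (round (a - b))\<bar>"
proof -
  have "frac a - frac b = (a - b) + of_int (floor b - floor a)"
    by (simp add: frac_def)
  then show ?thesis unfolding circ_dist_def using dint_shift[of "a - b" "floor b - floor a"]
    by simp
qed

lemma ann_dist_ge: "circ_dist (snd p) (snd p') \<le> ann_dist p p'"
proof -
  obtain a b a' b' where p: "p = (a,b)" "p' = (a',b')" by (cases p, cases p')
  have "mdist (metric ({0..<1}, circ_dist)) = circ_dist"
    using Metric_space.mdist_metric[OF Metric_space_circ] .
  moreover have "circ_dist b b' \<le> sqrt (x\<^sup>2 + (circ_dist b b')\<^sup>2)" for x :: real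
  proof -
    have "circ_dist b b' \<le> sqrt ((circ_dist b b')\<^sup>2)" by simp
    also have "\<dots> \<le> sqrt (x\<^sup>2 + (circ_dist b b')\<^sup>2)" by (intro real_sqrt_le_mono) simp
    finally show ?thesis .
  qed
  ultimately show ?thesis unfolding ann_dist_def ann_metric_def p
    by (simp add: prod_dist_def)
qed

lemma half_not_near:
  fixes k z :: int
  shows "\<bar>of_int k + 1/2 - (of_int z :: real)\<bar> \<ge> 1/2"
proof (cases "z \<le> k")
  case True
  then have "(of_int z :: real) \<le> of_int k" by simp
  then show ?thesis by simp
next
  case False
  then have "(of_int z :: real) \<ge> of_int k + 1" by simp
  then show ?thesis by simp
qed

lemma conn_round_lt:
  fixes g :: "'a \<Rightarrow> real"
  assumes "connected (g ` P)" "\<forall>w\<in>P. \<bar>g w - of_int (round (g w))\<bar> < 1/2"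
    "u \<in> P" "v \<in> P" "round (g u) < round (g v)"
  shows False
proof -
  define c where "c = of_int (round (g u)) + (1/2::real)"
  have gu: "\<bar>g u - of_int (round (g u))\<bar> < 1/2" using assms(2,3) by blast
  have gv: "\<bar>g v - of_int (round (g v))\<bar> < 1/2" using assms(2,4) by blast
  have "g u < c" using gu unfolding c_def by linarith
  have "of_int (round (g u)) + 1 \<le> (of_int (round (g v)) :: real)" using assms(5) by simp
  then have "c \<le> g v" using gv unfolding c_def by linarith
  then have "c \<in> g ` P"
    using connected_contains_Icc[OF assms(1), of "g u" "g v"] \<open>g u < c\<close> assms(3,4) by auto
  then obtain w where "w \<in> P" "c = g w" by auto
  then show False using assms(2) half_not_near[of "round (g u)" "round c"] unfolding c_def
    by fastforce
qed

lemma conn_round: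
  fixes g :: "'a \<Rightarrow> real"
  assumes "connected (g ` P)" "\<forall>w\<in>P. \<bar>g w - of_int (round (g w))\<bar> < 1/2"
    "u \<in> P" "v \<in> P"
  shows "round (g u) = round (g v)"
  using conn_round_lt[OF assms(1,2,3,4)] conn_round_lt[OF assms(1,2,4,3)]
  by (meson linorder_neqE)

lemma arith_bound:
  fixes X m eps C :: real and n N k j :: nat
  assumes "n > 0" "N \<ge> 1" "k*N + j = n" "j < N" "\<bar>X - k*m\<bar> \<le> k*eps + C"
    "eps \<ge> 0" "C \<ge> 0" "(C + \<bar>m\<bar>)/n \<le> eps"
  shows "\<bar>X/n - m/N\<bar> \<le> 2*eps"
proof -
  have nr: "real n > 0" using assms(1) by simp
  have Nr: "real N > 0" using assms(2) by simp
  have eq: "X/n - m/N = (X - k*m)/n - m*j/(n*N)"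
  proof -
    have "real (k * N + j) = real n" using assms(3) by simp
    then have hj: "real j = real n - real k * real N" by simp
    show ?thesis using nr Nr by (simp add: field_simps hj)
  qed
  have "k \<le> k*N" using assms(2) by simp
  then have "k \<le> n" using assms(3) by linarith
  then have kn: "real k \<le> real n" by simp
  have t1: "\<bar>(X - k*m)/n\<bar> \<le> eps + C/n"
  proof -
    have "\<bar>(X - k*m)/n\<bar> = \<bar>X - k*m\<bar>/n" using nr by simp
    also have "\<dots> \<le> (k*eps + C)/n" using assms(5) nr by (simp add: divide_right_mono)
    also have "\<dots> = (k/n)*eps + C/n" by (simp add: add_divide_distrib)
    also have "\<dots> \<le> eps + C/n"
    proof -
      have "k/n \<le> 1" using kn nr by simp
      then have "(k/n)*eps \<le> 1*eps" using assms(6) by (rule mult_right_mono)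
      then show ?thesis by simp
    qed
    finally show ?thesis .
  qed
  have t2: "\<bar>m*j/(n*N)\<bar> \<le> \<bar>m\<bar>/n"
  proof -
    have "j/N \<le> (1::real)" using assms(4) Nr by simp
    have "\<bar>m*j/(n*N)\<bar> = (\<bar>m\<bar>/n) * (j/N)" using nr Nr by (simp add: abs_mult)
    also have "\<dots> \<le> (\<bar>m\<bar>/n) * 1"
      by (rule mult_left_mono[OF \<open>j/N \<le> 1\<close>]) simp
    also have "\<dots> = \<bar>m\<bar>/n" by simp
    finally show ?thesis .
  qed
  have "\<bar>X/n - m/N\<bar> \<le> eps + C/n + \<bar>m\<bar>/n" unfolding eq
    by (rule order_trans[OF abs_triangle_ineq4]) (rule add_mono[OF t1 t2])
  also have "\<dots> = eps + (C + \<bar>m\<bar>)/n" by (simp add: add_divide_distrib)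
  finally show ?thesis using assms(8) by linarith
qed

lemma rate_bound:
  fixes D :: "nat \<Rightarrow> 'a \<Rightarrow> real" and T :: "'a \<Rightarrow> 'a" and m :: real
  assumes coc: "\<And>a b y. D (a+b) y = D a ((T^^b) y) + D b y"
    and inv: "\<And>y. y\<in>P \<Longrightarrow> T y \<in> P"
    and N: "N \<ge> 1" and bd: "\<And>w. w\<in>P \<Longrightarrow> \<bar>D N w - m\<bar> \<le> eps" and y: "y\<in>P" and e: "eps > 0"
  shows "eventually (\<lambda>n. \<bar>D n y / n - m / N\<bar> \<le> 2*eps) sequentially"
proof -
  have invn: "(T^^k) w \<in> P" if "w \<in> P" for k w
    using that by (induction k) (auto intro: inv)
  have blocks: "\<bar>D (k*N) w - k*m\<bar> \<le> k*eps" if "w \<in> P" for k w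
  proof (induction k)
    case 0
    have "D (0+0) w = D 0 ((T^^0) w) + D 0 w" by (rule coc)
    then show ?case by simp
  next
    case (Suc k)
    have "D (N + k*N) w = D N ((T^^(k*N)) w) + D (k*N) w" by (rule coc)
    moreover have "\<bar>D N ((T^^(k*N)) w) - m\<bar> \<le> eps" using bd invn that by blast
    ultimately show ?case using Suc by (simp add: algebra_simps)
  qed
  define C where "C = (\<Sum>j<N. \<bar>D j y\<bar>)"
  have C0: "C \<ge> 0" unfolding C_def by (simp add: sum_nonneg)
  have Cj: "\<bar>D j y\<bar> \<le> C" if "j < N" for j
    unfolding C_def using that by (intro member_le_sum) auto
  define n0 where "n0 = nat (ceiling ((C + \<bar>m\<bar>)/eps)) + 1"
  show ?thesis unfolding eventually_sequentially
  proof (intro exI allI impI)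
    fix n assume "n0 \<le> n"
    then have npos: "n > 0" unfolding n0_def by simp
    have "(C + \<bar>m\<bar>)/eps \<le> real n" using \<open>n0 \<le> n\<close> unfolding n0_def by linarith
    then have small: "(C + \<bar>m\<bar>)/n \<le> eps" using e npos by (simp add: field_simps)
    define k where "k = n div N"
    define j where "j = n mod N"
    have kj: "k*N + j = n" unfolding k_def j_def by simp
    have jN: "j < N" unfolding j_def using N by simp
    have "D n y = D (k*N + j) y" using kj by simp
    also have "\<dots> = D (k*N) ((T^^j) y) + D j y" by (rule coc)
    finally have "\<bar>D n y - k*m\<bar> \<le> k*eps + C"
      using blocks[OF invn[OF y], of k j] Cj[OF jN] by linarith
    then show "\<bar>D n y / n - m / N\<bar> \<le> 2*eps"
      using arith_bound[OF npos N kj jN _ _ C0 small] e by simp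
  qed
qed

lemma common_limit:
  fixes f :: "nat \<Rightarrow> 'a \<Rightarrow> real"
  assumes h: "\<And>eps. eps > 0 \<Longrightarrow> \<exists>r. \<forall>y\<in>P. eventually (\<lambda>n. \<bar>f n y - r\<bar> \<le> eps) sequentially"
  shows "\<exists>\<alpha>. \<forall>y\<in>P. (\<lambda>n. f n y) \<longlonglongrightarrow> \<alpha>"
proof (cases "P = {}")
  case True then show ?thesis by simp
next
  case False
  then obtain y0 where y0: "y0 \<in> P" by auto
  have "Cauchy (\<lambda>n. f n y0)"
    unfolding Cauchy_iff
  proof (intro allI impI)
    fix e :: real assume "e > 0"
    then obtain r where "\<forall>y\<in>P. eventually (\<lambda>n. \<bar>f n y - r\<bar> \<le> e/3) sequentially"
      using h[of "e/3"] by auto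
    then obtain M where M: "\<And>n. n \<ge> M \<Longrightarrow> \<bar>f n y0 - r\<bar> \<le> e/3"
      using y0 unfolding eventually_sequentially by blast
    show "\<exists>M. \<forall>m\<ge>M. \<forall>n\<ge>M. norm (f m y0 - f n y0) < e"
    proof (intro exI[of _ M] allI impI)
      fix a b assume "M \<le> a" "M \<le> b"
      then have "\<bar>f a y0 - r\<bar> \<le> e/3" "\<bar>f b y0 - r\<bar> \<le> e/3" using M by auto
      then have "\<bar>f a y0 - f b y0\<bar> < e" using \<open>e > 0\<close> by linarith
      then show "norm (f a y0 - f b y0) < e" by simp
    qed
  qed
  then obtain L where L: "(\<lambda>n. f n y0) \<longlonglongrightarrow> L"
    using Cauchy_convergent_iff convergent_def by blast
  show ?thesis
  proof (intro exI ballI)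
    fix y assume "y \<in> P"
    show "(\<lambda>n. f n y) \<longlonglongrightarrow> L"
      unfolding LIMSEQ_iff
    proof (intro allI impI)
      fix e :: real assume "e > 0"
      then obtain r where "\<forall>y\<in>P. eventually (\<lambda>n. \<bar>f n y - r\<bar> \<le> e/3) sequentially"
        using h[of "e/3"] by auto
      then obtain M1 M2 where M1: "\<And>n. n \<ge> M1 \<Longrightarrow> \<bar>f n y0 - r\<bar> \<le> e/3"
        and M2: "\<And>n. n \<ge> M2 \<Longrightarrow> \<bar>f n y - r\<bar> \<le> e/3"
        using y0 \<open>y \<in> P\<close> unfolding eventually_sequentially by meson
      obtain M3 where M3: "\<And>n. n \<ge> M3 \<Longrightarrow> norm (f n y0 - L) < e/3"
        using L \<open>e > 0\<close> unfolding LIMSEQ_iff by (meson divide_pos_pos zero_less_numeral)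
      show "\<exists>no. \<forall>n\<ge>no. norm (f n y - L) < e"
      proof (intro exI[of _ "max M1 (max M2 M3)"] allI impI)
        fix n assume "max M1 (max M2 M3) \<le> n"
        then have "\<bar>f n y0 - r\<bar> \<le> e/3" "\<bar>f n y - r\<bar> \<le> e/3" "\<bar>f n y0 - L\<bar> < e/3"
          using M1[of n] M2[of n] M3[of n] by auto
        then have "\<bar>f n y - L\<bar> < e" by linarith
        then show "norm (f n y - L) < e" by simp
      qed
    qed
  qed
qed

theorem corollary2p5:
  fixes H Ht :: "real \<times> real \<Rightarrow> real \<times> real" and \<Psi> :: "(real \<times> real) set"
  assumes "homeomorphic_map ann_top ann_top H"
    and "closedin ann_top \<Psi>"
    and "H ` \<Psi> = \<Psi>"
    and "continuous_on ({0..1} \<times> UNIV) Ht"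
    and "Ht ` ({0..1} \<times> UNIV) \<subseteq> {0..1} \<times> UNIV"
    and "\<forall>y \<in> {0..1} \<times> UNIV. ann_q (Ht y) = H (ann_q y)"
    and "uniformly_rigid_on \<Psi> H"
    and "connected {y \<in> {0..1} \<times> UNIV. ann_q y \<in> \<Psi>}"
  shows "\<exists>\<alpha>::real. \<forall>y \<in> {y \<in> {0..1} \<times> UNIV. ann_q y \<in> \<Psi>}.
           (\<lambda>n. (snd ((Ht ^^ n) y) - snd y) / real n) \<longlonglongrightarrow> \<alpha>"
proof -
  define S :: "(real \<times> real) set" where "S = {0..1} \<times> UNIV"
  define P where "P = {y \<in> S. ann_q y \<in> \<Psi>}"
  define D where "D = (\<lambda>n y. snd ((Ht ^^ n) y) - snd y)"
  have htS: "Ht y \<in> S" if "y \<in> S" for y using assms(5) that unfolding S_def by blast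
  have htnS: "(Ht^^n) y \<in> S" if "y \<in> S" for n y
    using that by (induction n) (auto intro: htS)
  have qn: "ann_q ((Ht^^n) y) = (H^^n) (ann_q y)" if "y \<in> S" for n y
  proof (induction n)
    case 0 then show ?case by simp
  next
    case (Suc n)
    have "ann_q ((Ht^^Suc n) y) = ann_q (Ht ((Ht^^n) y))" by simp
    also have "\<dots> = H (ann_q ((Ht^^n) y))" using assms(6) htnS[OF that] unfolding S_def by blast
    finally show ?case using Suc by simp
  qed
  have inv: "Ht y \<in> P" if "y \<in> P" for y
  proof -
    have "y \<in> S" "ann_q y \<in> \<Psi>" using that unfolding P_def by auto
    then have "ann_q (Ht y) \<in> \<Psi>" using assms(3,6) unfolding S_def by blast
    then show ?thesis using htS \<open>y \<in> S\<close> unfolding P_def by blast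
  qed
  have contn: "continuous_on S (Ht^^n)" for n
  proof (induction n)
    case 0 then show ?case by (simp add: continuous_on_id)
  next
    case (Suc n)
    have "continuous_on ((Ht^^n) ` S) Ht"
      by (rule continuous_on_subset[OF assms(4)[folded S_def]]) (use htnS in blast)
    then have "continuous_on S (Ht \<circ> (Ht^^n))"
      by (rule continuous_on_compose[OF Suc])
    then show ?case by simp
  qed
  have coc: "D (a+b) y = D a ((Ht^^b) y) + D b y" for a b y
    unfolding D_def by (simp add: funpow_add)
  have key: "\<exists>r. \<forall>y\<in>P. eventually (\<lambda>n. \<bar>D n y / real n - r\<bar> \<le> eps) sequentially"
    if eps: "eps > 0" for eps
  proof (cases "P = {}")
    case True then show ?thesis by simp
  next
    case False
    then obtain w0 where w0: "w0 \<in> P" by auto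
    define \<delta> where "\<delta> = min (eps/2) (1/4::real)"
    have dpos: "\<delta> > 0" using eps unfolding \<delta>_def by simp
    obtain nn :: "nat \<Rightarrow> nat" where nn: "strict_mono nn"
      and conv: "\<And>e. e > 0 \<Longrightarrow> \<forall>\<^sub>F i in sequentially. \<forall>y\<in>\<Psi>. ann_dist ((H ^^ nn i) y) y < e"
      using assms(7) unfolding uniformly_rigid_on_def by blast
    have "\<forall>\<^sub>F i in sequentially. (\<forall>y\<in>\<Psi>. ann_dist ((H ^^ nn i) y) y < \<delta>) \<and> i \<ge> 1"
      using conv[OF dpos] eventually_ge_at_top by (rule eventually_conj)
    then obtain i where i: "\<forall>y\<in>\<Psi>. ann_dist ((H ^^ nn i) y) y < \<delta>" "i \<ge> 1"
      unfolding eventually_sequentially by blast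
    define N where "N = nn i"
    have N1: "N \<ge> 1" using seq_suble[OF nn, of i] i(2) unfolding N_def by simp
    have near: "\<bar>D N w - of_int (round (D N w))\<bar> < \<delta>" if "w \<in> P" for w
    proof -
      have wS: "w \<in> S" and wq: "ann_q w \<in> \<Psi>" using that unfolding P_def by auto
      have sq: "snd (ann_q x) = frac (snd x)" for x by (cases x) (simp add: ann_q_def)
      have "circ_dist (snd (ann_q ((Ht^^N) w))) (snd (ann_q w)) \<le> ann_dist (ann_q ((Ht^^N) w)) (ann_q w)"
        by (rule ann_dist_ge)
      also have "\<dots> = ann_dist ((H^^N) (ann_q w)) (ann_q w)" using qn[OF wS] by simp
      also have "\<dots> < \<delta>" using i(1) wq unfolding N_def by blast
      finally show ?thesis unfolding sq circ_frac D_def .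
    qed
    have cP: "continuous_on P (Ht^^N)"
      by (rule continuous_on_subset[OF contn]) (auto simp: P_def)
    have cD: "continuous_on P (D N)"
      unfolding D_def by (intro continuous_intros cP)
    have connP: "connected P" using assms(8) unfolding P_def S_def .
    have connD: "connected (D N ` P)" by (rule connected_continuous_image[OF cD connP])
    define m where "m = round (D N w0)"
    have bd: "\<bar>D N w - of_int m\<bar> \<le> \<delta>" if "w \<in> P" for w
    proof -
      have "\<forall>w\<in>P. \<bar>D N w - of_int (round (D N w))\<bar> < 1/2"
        using near unfolding \<delta>_def by fastforce
      then have "round (D N w) = m" unfolding m_def by (rule conn_round[OF connD _ that w0])
      then show ?thesis using near[OF that] by simp
    qed
    show ?thesis
    proof (intro exI ballI)
      fix y assume "y \<in> P"
      have "eventually (\<lambda>n. \<bar>D n y / n - of_int m / N\<bar> \<le> 2*\<delta>) sequentially"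
        by (rule rate_bound[where T = Ht and P = P, OF coc inv N1 bd \<open>y \<in> P\<close> dpos])
      then show "eventually (\<lambda>n. \<bar>D n y / real n - of_int m / N\<bar> \<le> eps) sequentially"
        by (rule eventually_mono) (simp add: \<delta>_def)
    qed
  qed
  have "\<exists>\<alpha>. \<forall>y\<in>P. (\<lambda>n. D n y / real n) \<longlonglongrightarrow> \<alpha>"
    by (rule common_limit) (rule key)
  then show ?thesis unfolding P_def S_def D_def .
qed

end
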